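(* Let $m,k\ge1$, $f\in\mathbb{Q}^m\setminus\mathbb{Z}^m$, $r^1,\dots,r^k\in\mathbb{Q}^m\setminus\{0\}$, assume $X=\{(x,s)\in\mathbb{Z}^m\times\mathbb{R}^k_+ : x=f+\sum_j r^js_j\}\neq\emptyset$, and let $P=\{(x,s)\in\mathbb{R}^m\times\mathbb{R}^k_+ : x=f+\sum_j r^js_j\}$. Let $L$ be a rational lattice-free polytope in $\mathbb{R}^m$ containing $f$ in its interior and having rays going into its corners. If the $L$-cut $\sum_{j}\psi(r^j)s_j\ge1$ has finite split rank with respect to $P$, then every face of $L_I$ that is not contained in a facet of $L$ is 2-partitionable.
   Context: Lattice-free: no integer point in the interior. $\psi(r)=\inf\{t>0: r/t\in L-f\}$ (gauge of $L-f$). The boundary point of $r^j$ is the intersection of $\{f+\lambda r^j:\lambda\ge0\}$ with the boundary of $L$; $L$ has rays going into its corners if every vertex of $L$ is the boundary point of some $r^j$. $L_I$ is the convex hull of the integer points of $L$. A split is $(\pi,\pi_0)$ with $\pi\in\mathbb{Z}^m,\pi_0\in\mathbb{Z}$ acting on $x$, with boundary hyperplanes $\{\pi x=\pi_0\}$, $\{\pi x=\pi_0+1\}$. For a polyhedron $Q$, $Q(\pi,\pi_0)=\mathrm{conv}((Q\cap\{\pi x\le\pi_0\})\cup(Q\cap\{\pi x\ge\pi_0+1\}))$; split closure = intersection of all $Q(\pi,\pi_0)$; rank-$t$ split closure defined iteratively (rank 0 is $Q$). Split rank of a valid inequality with respect to $Q$: least $t$ with the inequality valid for the rank-$t$ split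 closure of $Q$, or $+\infty$. A set of points is 2-partitionable if it has at most one element or it can be partitioned into two nonempty sets lying respectively on the two boundary hyperplanes of some split; a polytope is 2-partitionable if its set of integer points is. *)

theory Defs
  imports "HOL-Analysis.Analysis"
begin

definition int_vec :: "real^'m \<Rightarrow> bool" where
  "int_vec v \<longleftrightarrow> (\<forall>i. v $ i \<in> \<int>)"

definition rat_vec :: "real^'m \<Rightarrow> bool" where
  "rat_vec v \<longleftrightarrow> (\<forall>i. v $ i \<in> \<rat>)"

definition lattice_free :: "(real^'m) set \<Rightarrow> bool" where
  "lattice_free L \<longleftrightarrow> (\<forall>z. int_vec z \<longrightarrow> z \<notin> interior L)"

definition rational_polytope :: "(real^'m) set \<Rightarrow> bool" where
  "rational_polytope L \<longleftrightarrow>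
     (\<exists>V. finite V \<and> (\<forall>v\<in>V. rat_vec v) \<and> L = convex hull V)"

definition gauge_psi :: "(real^'m) set \<Rightarrow> real^'m \<Rightarrow> real^'m \<Rightarrow> real" where
  "gauge_psi L f r = Inf {t. t > 0 \<and> (1 / t) *\<^sub>R r \<in> (\<lambda>y. y - f) ` L}"

definition is_boundary_point_of_ray :: "(real^'m) set \<Rightarrow> real^'m \<Rightarrow> real^'m \<Rightarrow> real^'m \<Rightarrow> bool" where
  "is_boundary_point_of_ray L f r v \<longleftrightarrow>
     v \<in> frontier L \<and> (\<exists>c\<ge>0. v = f + c *\<^sub>R r)"

definition rays_into_corners :: "(real^'m) set \<Rightarrow> real^'m \<Rightarrow> ('k \<Rightarrow> real^'m) \<Rightarrow> bool" where
  "rays_into_corners L f r \<longleftrightarrow>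
     (\<forall>v. v extreme_point_of L \<longrightarrow> (\<exists>j. is_boundary_point_of_ray L f (r j) v))"

definition int_hull :: "(real^'m) set \<Rightarrow> (real^'m) set" where
  "int_hull L = convex hull {z \<in> L. int_vec z}"

definition split_set ::
  "((real^'m) \<times> (real^'k)) set \<Rightarrow> real^'m \<Rightarrow> real \<Rightarrow> ((real^'m) \<times> (real^'k)) set" where
  "split_set Q \<pi> \<pi>0 = convex hull ({p \<in> Q. \<pi> \<bullet> fst p \<le> \<pi>0} \<union> {p \<in> Q. \<pi> \<bullet> fst p \<ge> \<pi>0 + 1})"

definition split_closure :: "((real^'m) \<times> (real^'k)) set \<Rightarrow> ((real^'m) \<times> (real^'k)) set" where
  "split_closure Q = (\<Inter>\<pi>\<in>{\<pi>. int_vec \<pi>}. \<Inter>\<pi>0\<in>\<int>. split_set Q \<pi> \<pi>0)"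

definition rank_split_closure :: "nat \<Rightarrow> ((real^'m) \<times> (real^'k)) set \<Rightarrow> ((real^'m) \<times> (real^'k)) set" where
  "rank_split_closure t Q = (split_closure ^^ t) Q"

definition finite_split_rank ::
  "((real^'m) \<times> (real^'k)) set \<Rightarrow> ((real^'m) \<times> (real^'k) \<Rightarrow> bool) \<Rightarrow> bool" where
  "finite_split_rank Q ineq \<longleftrightarrow> (\<exists>t. \<forall>p \<in> rank_split_closure t Q. ineq p)"

definition two_partitionable_set :: "(real^'m) set \<Rightarrow> bool" where
  "two_partitionable_set S \<longleftrightarrow>
     (\<forall>a\<in>S. \<forall>b\<in>S. a = b) \<or>
     (\<exists>\<pi> \<pi>0 A B. int_vec \<pi> \<and> \<pi>0 \<in> \<int> \<and> A \<noteq> {} \<and> B \<noteq> {} \<and>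
        A \<inter> B = {} \<and> A \<union> B = S \<and>
        (\<forall>a\<in>A. \<pi> \<bullet> a = \<pi>0) \<and> (\<forall>b\<in>B. \<pi> \<bullet> b = \<pi>0 + 1))"

definition two_partitionable :: "(real^'m) set \<Rightarrow> bool" where
  "two_partitionable F \<longleftrightarrow> two_partitionable_set {z \<in> F. int_vec z}"

end

theory Submission
  imports Defs
begin


lemma avg_in_hull:
  fixes g :: "'b \<Rightarrow> 'a::real_vector"
  assumes "finite A" "A \<noteq> {}"
  shows "(1 / real (card A)) *\<^sub>R (\<Sum>x\<in>A. g x) \<in> convex hull (g ` A)"
proof -
  have "(\<Sum>x\<in>A. (1 / real (card A)) *\<^sub>R g x) \<in> convex hull (g ` A)"
    apply (rule convex_sum)
    using assms by (auto intro: hull_inc)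
  then show ?thesis by (simp add: scaleR_sum_right)
qed

lemma avg_split:
  fixes g :: "'b \<Rightarrow> 'a::real_vector"
  assumes "finite A" "z \<in> A" "card A = n" "n \<ge> 2"
  shows "(1 / real n) *\<^sub>R (\<Sum>x\<in>A. g x) =
     (1 / real n) *\<^sub>R g z + ((real n - 1) / real n) *\<^sub>R ((1 / (real n - 1)) *\<^sub>R (\<Sum>x\<in>A-{z}. g x))"
proof -
  have "(\<Sum>x\<in>A. g x) = g z + (\<Sum>x\<in>A-{z}. g x)" using assms by (simp add: sum.remove)
  moreover have "((real n - 1) / real n) * (1 / (real n - 1)) = 1 / real n" using assms by simp
  ultimately show ?thesis by (simp add: scaleR_add_right)
qed

lemma three_comb:
  fixes C :: "'a::real_vector set"
  assumes C: "convex C" and ys: "ys \<in> C" and rb: "rb \<in> C" and w: "w \<in> C"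
    and wdef: "w = (1 - \<beta>) *\<^sub>R ys + \<beta> *\<^sub>R (yb + h *\<^sub>R d)"
    and yb: "yb = (1 / n) *\<^sub>R ys + ((n - 1) / n) *\<^sub>R rb"
    and b1: "1/2 \<le> \<beta>" and b2: "\<beta> < 1" and n2: "n \<ge> 2"
  shows "yb + (h / (2 * n)) *\<^sub>R d \<in> C"
proof -
  define \<theta> where "\<theta> = 1 / (2 * n * \<beta>)"
  define a where "a = (1 - 1/(2*n)) / n - \<theta> * (1 - \<beta>)"
  define b where "b = (1 - 1/(2*n)) * (n - 1) / n"
  have tb: "\<theta> * \<beta> = 1/(2*n)" using b1 n2 by (simp add: \<theta>_def)
  have bn: "1 \<le> \<beta> * n" using mult_mono[of "1/2" \<beta> 2 n] b1 n2 by auto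
  have th0: "0 < \<theta>" "\<theta> < 1" using bn b1 n2 by (auto simp: \<theta>_def field_simps)
  have a0: "0 \<le> a"
  proof -
    have "\<theta> * (1 - \<beta>) = (1 - \<beta>) / (2*n*\<beta>)" by (simp add: \<theta>_def)
    also have "\<dots> \<le> 1 / (2 * n)" using b1 b2 n2 by (simp add: field_simps)
    also have "\<dots> \<le> (1 - 1/(2*n)) / n"
    proof -
      have "n*4 \<le> n*(n*2)" using mult_left_mono[of 4 "n*2" n] n2 by auto
      then show ?thesis using n2 by (simp add: field_simps)
    qed
    finally show ?thesis by (simp add: a_def)
  qed
  have "0 \<le> 1 - 1/(2*n)" using n2 by (simp add: field_simps)
  then have b0: "0 \<le> b" using n2 unfolding b_def by (intro divide_nonneg_pos mult_nonneg_nonneg) auto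
  have sum1: "\<theta> + a + b = 1"
    using n2 b1 by (simp add: a_def b_def \<theta>_def field_simps)
  define u where "u = (a / (1 - \<theta>)) *\<^sub>R ys + (b / (1 - \<theta>)) *\<^sub>R rb"
  have uC: "u \<in> C" unfolding u_def
  proof (rule convexD[OF C ys rb])
    have "a + b = 1 - \<theta>" using sum1 by simp
    then show "a / (1 - \<theta>) + b / (1 - \<theta>) = 1" using th0
      by (simp add: add_divide_distrib[symmetric])
  qed (use a0 b0 th0 in auto)
  have eq: "yb + (h / (2 * n)) *\<^sub>R d = \<theta> *\<^sub>R w + (1 - \<theta>) *\<^sub>R u"
  proof -
    have e1: "(1 - \<theta>) *\<^sub>R u = a *\<^sub>R ys + b *\<^sub>R rb" using th0 by (simp add: u_def scaleR_add_right)
    have tbh: "\<theta> * (\<beta> * h) = h / (2*n)" using tb by (metis mult.assoc times_divide_eq_left mult.commute mult_1)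
    have e2: "\<theta> *\<^sub>R w = (\<theta> * (1 - \<beta>)) *\<^sub>R ys + (1/(2*n)) *\<^sub>R yb + (h/(2*n)) *\<^sub>R d"
      unfolding wdef using tb tbh by (simp add: scaleR_add_right)
    have c1: "\<theta> * (1 - \<beta>) + a + (1/(2*n)) * (1/n) = 1/n"
      using n2 by (simp add: a_def field_simps)
    have c2: "b + (1/(2*n)) * ((n-1)/n) = (n-1)/n"
      using n2 by (simp add: b_def field_simps)
    have "\<theta> *\<^sub>R w + (1 - \<theta>) *\<^sub>R u =
       (\<theta> * (1 - \<beta>) + a + (1/(2*n)) * (1/n)) *\<^sub>R ys + (b + (1/(2*n)) * ((n-1)/n)) *\<^sub>R rb + (h/(2*n)) *\<^sub>R d"
      unfolding e1 e2 yb by (simp add: algebra_simps)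
    also have "\<dots> = yb + (h / (2 * n)) *\<^sub>R d" unfolding c1 c2 yb by simp
    finally show ?thesis by simp
  qed
  show ?thesis unfolding eq
    by (rule convexD[OF C w uC]) (use th0 in auto)
qed


lemma int_inner: "int_vec a \<Longrightarrow> int_vec b \<Longrightarrow> a \<bullet> b \<in> \<int>"
  unfolding int_vec_def inner_vec_def by (auto intro!: Ints_sum Ints_mult)

lemma Ints_gap:
  fixes x y :: real
  assumes "x \<in> \<int>" "y \<in> \<int>"
  shows "x \<le> y \<or> x \<ge> y + 1"
proof -
  obtain i j where "x = of_int i" "y = of_int j" using assms by (auto elim!: Ints_cases)
  then show ?thesis by auto
qed

lemma split_set_gen:
  assumes "p \<in> Q" "int_vec (fst p)" "int_vec \<pi>" "\<pi>0 \<in> \<int>"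
  shows "p \<in> split_set Q \<pi> \<pi>0"
proof -
  have "\<pi> \<bullet> fst p \<le> \<pi>0 \<or> \<pi> \<bullet> fst p \<ge> \<pi>0 + 1"
    using Ints_gap int_inner assms by blast
  then show ?thesis unfolding split_set_def using assms(1) by (auto intro: hull_inc)
qed

lemma key_step:
  fixes S :: "(real^'m) set" and sg :: "real^'m \<Rightarrow> real^'k" and d :: "(real^'m) \<times> (real^'k)"
  defines "g \<equiv> (\<lambda>z. (z, sg z))"
  assumes fin: "finite S" and cS: "card S = n" and n2: "n \<ge> 2" and intS: "\<forall>z\<in>S. int_vec z"
    and yb: "yb = (1 / real n) *\<^sub>R (\<Sum>z\<in>S. g z)" and d0: "fst d = 0" and h0: "h > 0"
    and ipi: "int_vec \<pi>" and ipi0: "\<pi>0 \<in> \<int>"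
    and nonpart: "\<pi>0 < \<pi> \<bullet> fst yb \<Longrightarrow> \<pi> \<bullet> fst yb < \<pi>0 + 1 \<Longrightarrow>
        \<exists>z\<in>S. \<pi> \<bullet> z \<noteq> \<pi>0 \<and> \<pi> \<bullet> z \<noteq> \<pi>0 + 1"
  shows "convex hull (g ` S \<union> {yb + (h / (2 * real n)) *\<^sub>R d})
     \<subseteq> split_set (convex hull (g ` S \<union> {yb + h *\<^sub>R d})) \<pi> \<pi>0"
proof -
  define K where "K = convex hull (g ` S \<union> {yb + h *\<^sub>R d})"
  define D where "D = split_set K \<pi> \<pi>0"
  have cD: "convex D" unfolding D_def split_set_def by simp
  have YD: "g ` S \<subseteq> D"
  proof
    fix y assume "y \<in> g ` S"
    then obtain z where z: "z \<in> S" "y = g z" by auto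
    show "y \<in> D" unfolding D_def
      by (rule split_set_gen) (use z intS ipi ipi0 in \<open>auto simp: g_def K_def intro: hull_inc\<close>)
  qed
  have hYD: "convex hull (g ` S) \<subseteq> D" using YD cD by (simp add: hull_minimal)
  have Sne: "S \<noteq> {}" using cS n2 by auto
  have ybY: "yb \<in> convex hull (g ` S)" using avg_in_hull[OF fin Sne, of g] cS yb by simp
  have qK: "yb + h *\<^sub>R d \<in> K" unfolding K_def by (rule hull_inc) simp
  have YK: "g ` S \<subseteq> K" unfolding K_def by (simp add: hull_inc subsetI)
  have cK: "convex K" unfolding K_def by simp
  define a where "a = \<pi> \<bullet> fst yb"
  have fq: "fst (yb + h *\<^sub>R d) = fst yb" using d0 by simp
  have target: "yb + (h / (2 * real n)) *\<^sub>R d \<in> D"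
  proof (cases "a \<le> \<pi>0 \<or> a \<ge> \<pi>0 + 1")
    case True
    have "yb + h *\<^sub>R d \<in> D" unfolding D_def split_set_def
      using True qK fq a_def by (auto intro: hull_inc)
    moreover have "yb \<in> D" using ybY hYD by auto
    ultimately have "(1 - 1/(2 * real n)) *\<^sub>R yb + (1/(2 * real n)) *\<^sub>R (yb + h *\<^sub>R d) \<in> D"
      using n2 by (intro convexD[OF cD]) auto
    moreover have "(1 - 1/(2 * real n)) *\<^sub>R yb + (1/(2 * real n)) *\<^sub>R (yb + h *\<^sub>R d)
        = yb + (h / (2 * real n)) *\<^sub>R d" by (simp add: algebra_simps)
    ultimately show ?thesis by simp
  next
    case False
    then have a1: "\<pi>0 < a" "a < \<pi>0 + 1" by auto
    obtain zs where zs: "zs \<in> S" "\<pi> \<bullet> zs \<noteq> \<pi>0" "\<pi> \<bullet> zs \<noteq> \<pi>0 + 1"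
      using nonpart a1 a_def by blast
    define t where "t = \<pi> \<bullet> zs"
    have tI: "t \<in> \<int>" using int_inner ipi intS zs t_def by blast
    have tc: "t \<le> \<pi>0 - 1 \<or> t \<ge> \<pi>0 + 2"
    proof -
      have "t \<le> \<pi>0 \<or> t \<ge> \<pi>0 + 1" using Ints_gap tI ipi0 by blast
      moreover have "t \<le> \<pi>0 - 1 \<or> t \<ge> \<pi>0" using Ints_gap[of t "\<pi>0 - 1"] tI ipi0 by auto
      moreover have "t \<le> \<pi>0 + 1 \<or> t \<ge> \<pi>0 + 2" using Ints_gap[of t "\<pi>0 + 1"] tI ipi0 by auto
      ultimately show ?thesis using zs t_def by auto
    qed
    obtain \<beta> where b: "1/2 \<le> \<beta>" "\<beta> < 1"
      and wD: "(1 - \<beta>) *\<^sub>R g zs + \<beta> *\<^sub>R (yb + h *\<^sub>R d) \<in> D"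
    proof -
      define w where "w \<beta> = (1 - \<beta>) *\<^sub>R g zs + \<beta> *\<^sub>R (yb + h *\<^sub>R d)" for \<beta>
      have wK: "w \<beta> \<in> K" if "0 \<le> \<beta>" "\<beta> \<le> 1" for \<beta>
        unfolding w_def using that zs YK qK by (intro convexD[OF cK]) auto
      have fw: "\<pi> \<bullet> fst (w \<beta>) = t + \<beta> * (a - t)" for \<beta>
        unfolding w_def using fq d0 by (simp add: g_def inner_add_right a_def t_def algebra_simps)
      show ?thesis
      proof (cases "t \<le> \<pi>0 - 1")
        case True
        define \<beta> where "\<beta> = (\<pi>0 - t) / (a - t)"
        have at: "a - t > 0" using True a1 by simp
        have b1: "1/2 \<le> \<beta>" using True a1 at by (simp add: \<beta>_def field_simps)
        have b2: "\<beta> < 1" using True a1 at by (simp add: \<beta>_def field_simps)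
        have "\<pi> \<bullet> fst (w \<beta>) = \<pi>0" unfolding fw using at by (simp add: \<beta>_def)
        then have "w \<beta> \<in> D" unfolding D_def split_set_def using wK b1 b2 by (auto intro: hull_inc)
        then show ?thesis by (intro that[OF b1 b2]) (simp add: w_def)
      next
        case False
        then have T2: "t \<ge> \<pi>0 + 2" using tc by auto
        define \<beta> where "\<beta> = (t - \<pi>0 - 1) / (t - a)"
        have at: "t - a > 0" using T2 a1 by simp
        have b1: "1/2 \<le> \<beta>" using T2 a1 at by (simp add: \<beta>_def field_simps)
        have b2: "\<beta> < 1" using T2 a1 at by (simp add: \<beta>_def field_simps)
        have "\<beta> * (a - t) = - (t - \<pi>0 - 1)" using at by (simp add: \<beta>_def field_simps)
        then have "\<pi> \<bullet> fst (w \<beta>) = \<pi>0 + 1" unfolding fw by simp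
        then have "w \<beta> \<in> D" unfolding D_def split_set_def using wK b1 b2 by (auto intro: hull_inc)
        then show ?thesis by (intro that[OF b1 b2]) (simp add: w_def)
      qed
    qed
    define rb where "rb = (1 / (real n - 1)) *\<^sub>R (\<Sum>x\<in>S-{zs}. g x)"
    have cS1: "card (S - {zs}) = n - 1" using cS zs fin by simp
    have S1ne: "S - {zs} \<noteq> {}" using cS1 n2 by (metis card.empty diff_is_0_eq not_numeral_le_zero le_add_diff_inverse2 one_le_numeral Suc_1 not_less_eq_eq)
    have "rb \<in> convex hull (g ` (S - {zs}))"
      using avg_in_hull[OF _ S1ne, of g] fin cS1 n2 by (simp add: rb_def of_nat_diff)
    also have "\<dots> \<subseteq> convex hull (g ` S)" by (intro hull_mono image_mono) auto
    finally have rbD: "rb \<in> D" using hYD by auto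
    have ysD: "g zs \<in> D" using YD zs by auto
    have ybs: "yb = (1 / real n) *\<^sub>R g zs + ((real n - 1) / real n) *\<^sub>R rb"
      unfolding yb rb_def using avg_split[OF fin zs(1) cS n2, of g] by simp
    show ?thesis
      by (rule three_comb[OF cD ysD rbD wD refl ybs b]) (use n2 in simp)
  qed
  have "convex hull (g ` S \<union> {yb + (h / (2 * real n)) *\<^sub>R d}) \<subseteq> D"
    using YD target cD by (intro hull_minimal) auto
  then show ?thesis unfolding D_def K_def .
qed



lemma sum_comb:
  fixes r :: "'k::finite \<Rightarrow> 'a::real_vector"
  shows "(\<Sum>j\<in>UNIV. (u * a $ j + v * b $ j) *\<^sub>R r j) =
    u *\<^sub>R (\<Sum>j\<in>UNIV. a $ j *\<^sub>R r j) + v *\<^sub>R (\<Sum>j\<in>UNIV. b $ j *\<^sub>R r j)"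
  by (simp add: scaleR_add_left sum.distrib scaleR_sum_right)

lemma cut_comb:
  fixes \<psi> :: "'k::finite \<Rightarrow> real"
  shows "(\<Sum>j\<in>UNIV. \<psi> j * (u * a $ j + v * b $ j)) =
    u * (\<Sum>j\<in>UNIV. \<psi> j * a $ j) + v * (\<Sum>j\<in>UNIV. \<psi> j * b $ j)"
  by (simp add: algebra_simps sum.distrib sum_distrib_left)

lemma convex_P:
  fixes f :: "real^'m" and r :: "'k::finite \<Rightarrow> real^'m"
  shows "convex {(x, s). (\<forall>j. s $ j \<ge> (0::real)) \<and> x = f + (\<Sum>j\<in>UNIV. s $ j *\<^sub>R r j)}"
proof (rule convexI)
  fix p q :: "(real^'m) \<times> (real^'k)" and u v :: real
  assume p: "p \<in> {(x, s). (\<forall>j. s $ j \<ge> (0::real)) \<and> x = f + (\<Sum>j\<in>UNIV. s $ j *\<^sub>R r j)}"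
    and q: "q \<in> {(x, s). (\<forall>j. s $ j \<ge> (0::real)) \<and> x = f + (\<Sum>j\<in>UNIV. s $ j *\<^sub>R r j)}"
    and uv: "0 \<le> u" "0 \<le> v" "u + v = 1"
  obtain x1 s1 where 1: "p = (x1, s1)" "\<forall>j. s1 $ j \<ge> 0" "x1 = f + (\<Sum>j\<in>UNIV. s1 $ j *\<^sub>R r j)" using p by auto
  obtain x2 s2 where 2: "q = (x2, s2)" "\<forall>j. s2 $ j \<ge> 0" "x2 = f + (\<Sum>j\<in>UNIV. s2 $ j *\<^sub>R r j)" using q by auto
  have "u *\<^sub>R x1 + v *\<^sub>R x2 = (u + v) *\<^sub>R f + (\<Sum>j\<in>UNIV. (u * s1 $ j + v * s2 $ j) *\<^sub>R r j)"
    unfolding sum_comb 1 2 by (simp add: algebra_simps)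
  then have "u *\<^sub>R x1 + v *\<^sub>R x2 = f + (\<Sum>j\<in>UNIV. (u *\<^sub>R s1 + v *\<^sub>R s2) $ j *\<^sub>R r j)"
    using uv by simp
  moreover have "\<forall>j. (u *\<^sub>R s1 + v *\<^sub>R s2) $ j \<ge> 0" using 1 2 uv by simp
  ultimately show "u *\<^sub>R p + v *\<^sub>R q \<in> {(x, s). (\<forall>j. s $ j \<ge> (0::real)) \<and> x = f + (\<Sum>j\<in>UNIV. s $ j *\<^sub>R r j)}"
    using 1 2 by simp
qed

lemma convex_lift_set:
  fixes f :: "real^'m" and r :: "'k::finite \<Rightarrow> real^'m" and \<psi> :: "'k \<Rightarrow> real"
  shows "convex {x. \<exists>s. (\<forall>j. s $ j \<ge> (0::real)) \<and> x = f + (\<Sum>j\<in>UNIV. s $ j *\<^sub>R r j) \<and> (\<Sum>j\<in>UNIV. \<psi> j * s $ j) \<le> 1}"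
proof (rule convexI)
  fix x1 x2 :: "real^'m" and u v :: real
  assume "x1 \<in> {x. \<exists>s. (\<forall>j. s $ j \<ge> (0::real)) \<and> x = f + (\<Sum>j\<in>UNIV. s $ j *\<^sub>R r j) \<and> (\<Sum>j\<in>UNIV. \<psi> j * s $ j) \<le> 1}"
    and "x2 \<in> {x. \<exists>s. (\<forall>j. s $ j \<ge> (0::real)) \<and> x = f + (\<Sum>j\<in>UNIV. s $ j *\<^sub>R r j) \<and> (\<Sum>j\<in>UNIV. \<psi> j * s $ j) \<le> 1}"
    and uv: "0 \<le> u" "0 \<le> v" "u + v = 1"
  then obtain s1 s2 where 1: "\<forall>j. s1 $ j \<ge> 0" "x1 = f + (\<Sum>j\<in>UNIV. s1 $ j *\<^sub>R r j)" "(\<Sum>j\<in>UNIV. \<psi> j * s1 $ j) \<le> 1"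
    and 2: "\<forall>j. s2 $ j \<ge> 0" "x2 = f + (\<Sum>j\<in>UNIV. s2 $ j *\<^sub>R r j)" "(\<Sum>j\<in>UNIV. \<psi> j * s2 $ j) \<le> 1"
    by auto
  define s where "s = u *\<^sub>R s1 + v *\<^sub>R s2"
  have "u *\<^sub>R x1 + v *\<^sub>R x2 = (u + v) *\<^sub>R f + (\<Sum>j\<in>UNIV. (u * s1 $ j + v * s2 $ j) *\<^sub>R r j)"
    unfolding sum_comb 1 2 by (simp add: algebra_simps)
  then have e: "u *\<^sub>R x1 + v *\<^sub>R x2 = f + (\<Sum>j\<in>UNIV. s $ j *\<^sub>R r j)"
    using uv by (simp add: s_def)
  have "(\<Sum>j\<in>UNIV. \<psi> j * s $ j) = u * (\<Sum>j\<in>UNIV. \<psi> j * s1 $ j) + v * (\<Sum>j\<in>UNIV. \<psi> j * s2 $ j)"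
    unfolding s_def using cut_comb[of \<psi> u s1 v s2] by simp
  also have "\<dots> \<le> u * 1 + v * 1" using 1 2 uv by (intro add_mono mult_left_mono) auto
  finally have c: "(\<Sum>j\<in>UNIV. \<psi> j * s $ j) \<le> 1" using uv by simp
  have "\<forall>j. s $ j \<ge> 0" using 1 2 uv by (simp add: s_def)
  then show "u *\<^sub>R x1 + v *\<^sub>R x2 \<in> {x. \<exists>s. (\<forall>j. s $ j \<ge> (0::real)) \<and> x = f + (\<Sum>j\<in>UNIV. s $ j *\<^sub>R r j) \<and> (\<Sum>j\<in>UNIV. \<psi> j * s $ j) \<le> 1}"
    using e c by blast
qed

lemma lift_le:
  fixes f :: "real^'m" and r :: "'k::finite \<Rightarrow> real^'m"
  assumes cL: "compact L" and cvL: "convex L" and fL: "f \<in> interior L"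
    and corners: "rays_into_corners L f r" and xL: "x \<in> L"
  shows "\<exists>s. (\<forall>j. s $ j \<ge> 0) \<and> x = f + (\<Sum>j\<in>UNIV. s $ j *\<^sub>R r j)
           \<and> (\<Sum>j\<in>UNIV. gauge_psi L f (r j) * s $ j) \<le> 1"
proof -
  define \<psi> where "\<psi> j = gauge_psi L f (r j)" for j
  define LS where "LS = {x. \<exists>s. (\<forall>j. s $ j \<ge> (0::real)) \<and> x = f + (\<Sum>j\<in>UNIV. s $ j *\<^sub>R r j) \<and> (\<Sum>j\<in>UNIV. \<psi> j * s $ j) \<le> 1}"
  have cLS: "convex LS" unfolding LS_def by (rule convex_lift_set)
  have ext: "v \<in> LS" if v: "v extreme_point_of L" for v
  proof -
    obtain j c where vj: "v \<in> frontier L" "c \<ge> 0" "v = f + c *\<^sub>R r j"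
      using corners v unfolding rays_into_corners_def is_boundary_point_of_ray_def by blast
    have vL: "v \<in> L" using vj(1) cL frontier_subset_closed compact_imp_closed by blast
    have "c \<noteq> 0"
    proof
      assume "c = 0"
      then have "v = f" using vj by simp
      then show False using vj(1) fL by (simp add: frontier_def)
    qed
    then have c0: "c > 0" using vj by simp
    have "\<psi> j \<le> 1 / c"
      unfolding \<psi>_def gauge_psi_def
    proof (rule cInf_lower)
      show "1 / c \<in> {t. 0 < t \<and> (1 / t) *\<^sub>R r j \<in> (\<lambda>y. y - f) ` L}"
        using c0 vL vj by (auto intro!: image_eqI[where x = v])
      show "bdd_below {t. 0 < t \<and> (1 / t) *\<^sub>R r j \<in> (\<lambda>y. y - f) ` L}"
        by (rule bdd_belowI[where m = 0]) auto
    qed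
    then have pc: "\<psi> j * c \<le> 1" using c0 by (simp add: field_simps)
    define s :: "real^'k" where "s = (\<chi> i. if i = j then c else 0)"
    have "(\<Sum>i\<in>UNIV. s $ i *\<^sub>R r i) = (\<Sum>i\<in>UNIV. if i = j then c *\<^sub>R r j else 0)"
      by (rule sum.cong) (auto simp: s_def)
    also have "\<dots> = c *\<^sub>R r j" by simp
    finally have "(\<Sum>i\<in>UNIV. s $ i *\<^sub>R r i) = c *\<^sub>R r j" .
    moreover have "(\<Sum>i\<in>UNIV. \<psi> i * s $ i) = \<psi> j * c"
      unfolding s_def by (simp add: if_distrib cong: if_cong)
    moreover have "\<forall>i. s $ i \<ge> 0" using c0 by (simp add: s_def)
    ultimately show ?thesis unfolding LS_def using vj pc by auto
  qed
  have "L = convex hull {x. x extreme_point_of L}" using Krein_Milman_Minkowski cL cvL by blast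
  also have "\<dots> \<subseteq> LS" using ext cLS by (intro hull_minimal) auto
  finally show ?thesis using xL unfolding LS_def \<psi>_def by auto
qed

lemma lift_lt:
  fixes f :: "real^'m" and r :: "'k::finite \<Rightarrow> real^'m"
  assumes cL: "compact L" and cvL: "convex L" and fL: "f \<in> interior L"
    and corners: "rays_into_corners L f r" and xL: "x \<in> interior L"
  shows "\<exists>s. (\<forall>j. s $ j \<ge> 0) \<and> x = f + (\<Sum>j\<in>UNIV. s $ j *\<^sub>R r j)
           \<and> (\<Sum>j\<in>UNIV. gauge_psi L f (r j) * s $ j) < 1"
proof -
  obtain e where e: "e > 0" "ball x e \<subseteq> L" using xL by (meson mem_interior)
  define N where "N = norm (x - f) + 1"
  define \<delta> where "\<delta> = e / (2 * N)"
  have np: "N > 0" unfolding N_def using norm_ge_zero[of "x - f"] by linarith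
  have d0: "\<delta> > 0" unfolding \<delta>_def using e np by (intro divide_pos_pos) auto
  have "norm (\<delta> *\<^sub>R (x - f)) < e"
  proof -
    have "norm (\<delta> *\<^sub>R (x - f)) = \<delta> * norm (x - f)" using d0 by simp
    also have "\<dots> \<le> \<delta> * N" using d0 by (simp add: N_def)
    also have "\<dots> = e / 2" using np unfolding \<delta>_def by simp
    finally show ?thesis using e by simp
  qed
  then have "x + \<delta> *\<^sub>R (x - f) \<in> L" using e by (auto simp: dist_norm)
  then obtain s where s: "\<forall>j. s $ j \<ge> 0" "x + \<delta> *\<^sub>R (x - f) = f + (\<Sum>j\<in>UNIV. s $ j *\<^sub>R r j)"
      "(\<Sum>j\<in>UNIV. gauge_psi L f (r j) * s $ j) \<le> 1"
    using lift_le[OF cL cvL fL corners] by blast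
  define s' where "s' = (1 / (1 + \<delta>)) *\<^sub>R s"
  have "(1 + \<delta>) *\<^sub>R (x - f) = (\<Sum>j\<in>UNIV. s $ j *\<^sub>R r j)" using s(2)
    by (simp add: algebra_simps)
  then have "(1 / (1 + \<delta>)) *\<^sub>R (\<Sum>j\<in>UNIV. s $ j *\<^sub>R r j) = (1 / (1 + \<delta>)) *\<^sub>R ((1 + \<delta>) *\<^sub>R (x - f))"
    by simp
  also have "\<dots> = x - f" using d0 by simp
  finally have "x - f = (1 / (1 + \<delta>)) *\<^sub>R (\<Sum>j\<in>UNIV. s $ j *\<^sub>R r j)" by simp
  then have e1: "x = f + (\<Sum>j\<in>UNIV. s' $ j *\<^sub>R r j)"
    by (simp add: s'_def scaleR_sum_right algebra_simps)
  have "(\<Sum>j\<in>UNIV. gauge_psi L f (r j) * s' $ j) = (1 / (1 + \<delta>)) * (\<Sum>j\<in>UNIV. gauge_psi L f (r j) * s $ j)"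
    by (simp add: s'_def sum_distrib_left algebra_simps)
  also have "\<dots> \<le> 1 / (1 + \<delta>)" using s(3) d0 by (simp add: divide_right_mono)
  also have "\<dots> < 1" using d0 by simp
  finally have "(\<Sum>j\<in>UNIV. gauge_psi L f (r j) * s' $ j) < 1" .
  moreover have "\<forall>j. s' $ j \<ge> 0" using s d0 by (simp add: s'_def)
  ultimately show ?thesis using e1 by blast
qed

lemma finite_int_bounded:
  fixes L :: "(real^'m) set"
  assumes "bounded L"
  shows "finite {z \<in> L. int_vec z}"
proof -
  obtain B where B: "\<forall>x\<in>L. norm x \<le> B" using assms bounded_iff by blast
  define A where "A = {k \<in> \<int>. \<bar>k\<bar> \<le> B}"
  have fA: "finite A" unfolding A_def by (rule finite_abs_int_segment)
  have "{z \<in> L. int_vec z} \<subseteq> vec_lambda ` (PiE UNIV (\<lambda>_. A))"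
  proof
    fix z assume z: "z \<in> {z \<in> L. int_vec z}"
    have "(\<lambda>i. z $ i) \<in> PiE UNIV (\<lambda>_. A)"
      using z B component_le_norm_cart[of z] unfolding A_def int_vec_def
      by (auto intro: order_trans)
    then show "z \<in> vec_lambda ` (PiE UNIV (\<lambda>_. A))" by (metis image_eqI vec_lambda_eta)
  qed
  moreover have "finite (vec_lambda ` (PiE UNIV (\<lambda>_. A)))" using fA by (simp add: finite_PiE)
  ultimately show ?thesis by (rule finite_subset)
qed



theorem theorem2:
  fixes f :: "real^'m"
    and r :: "'k::finite \<Rightarrow> real^'m"
    and L :: "(real^'m) set"
  assumes f_rat: "rat_vec f"
    and f_nonint: "\<not> int_vec f"
    and r_rat: "\<forall>j. rat_vec (r j)"
    and r_nz: "\<forall>j. r j \<noteq> 0"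
    and X_ne: "{(x, s). int_vec x \<and> (\<forall>j. s $ j \<ge> 0) \<and> x = f + (\<Sum>j\<in>UNIV. s $ j *\<^sub>R r j)} \<noteq> {}"
    and P_def: "P = {(x, s). (\<forall>j. s $ j \<ge> (0::real)) \<and> x = f + (\<Sum>j\<in>UNIV. s $ j *\<^sub>R r j)}"
    and L_poly: "rational_polytope L"
    and L_free: "lattice_free L"
    and f_int: "f \<in> interior L"
    and corners: "rays_into_corners L f r"
    and rank: "finite_split_rank P (\<lambda>(x, s). (\<Sum>j\<in>UNIV. gauge_psi L f (r j) * s $ j) \<ge> 1)"
  shows "\<forall>F. F face_of int_hull L \<and> \<not> (\<exists>G. G facet_of L \<and> F \<subseteq> G) \<longrightarrow> two_partitionable F"
proof (intro allI impI)
  fix F assume FF: "F face_of int_hull L \<and> \<not> (\<exists>G. G facet_of L \<and> F \<subseteq> G)"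
  then have Ff: "F face_of int_hull L" and Fnf: "\<not> (\<exists>G. G facet_of L \<and> F \<subseteq> G)" by auto
  show "two_partitionable F"
  proof (rule ccontr)
    assume np: "\<not> two_partitionable F"
    obtain V where V: "finite V" "L = convex hull V"
      using L_poly unfolding rational_polytope_def by blast
    have cL: "compact L" using V by (simp add: compact_convex_hull finite_imp_compact)
    have cvL: "convex L" using V by simp
    have polyL: "polyhedron L" using V by (intro polytope_imp_polyhedron) (auto simp: polytope_def)
    define T where "T = {z \<in> L. int_vec z}"
    have fT: "finite T" unfolding T_def using cL by (intro finite_int_bounded compact_imp_bounded)
    have IL: "int_hull L = convex hull T" by (simp add: int_hull_def T_def)
    have ILsub: "int_hull L \<subseteq> L" unfolding IL T_def using cvL by (intro hull_minimal) auto
    define S where "S = {z \<in> F. int_vec z}"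
    have FL: "F \<subseteq> L" using Ff face_of_imp_subset ILsub by blast
    have cvF: "convex F" using Ff face_of_imp_convex by blast
    have FS: "F = convex hull S"
    proof -
      obtain S' where S': "S' \<subseteq> T" "F = convex hull S'"
        using face_of_convex_hull_subset[OF finite_imp_compact[OF fT]] Ff IL by metis
      have "S' \<subseteq> S" using S' hull_subset[of S' convex] unfolding S_def T_def by auto
      then have "F \<subseteq> convex hull S" using S' hull_mono by blast
      moreover have "convex hull S \<subseteq> F" using cvF by (intro hull_minimal) (auto simp: S_def)
      ultimately show ?thesis by auto
    qed
    have SL: "S \<subseteq> L" using FL S_def by auto
    have "S \<subseteq> T" using SL unfolding S_def T_def by auto
    then have fS: "finite S" using fT by (rule finite_subset)
    have intS: "\<forall>z\<in>S. int_vec z" by (simp add: S_def)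
    from np have np1: "\<exists>a\<in>S. \<exists>b\<in>S. a \<noteq> b"
      and np2: "\<not> (\<exists>\<pi> \<pi>0 A B. int_vec \<pi> \<and> \<pi>0 \<in> \<int> \<and> A \<noteq> {} \<and> B \<noteq> {} \<and>
        A \<inter> B = {} \<and> A \<union> B = S \<and>
        (\<forall>a\<in>A. \<pi> \<bullet> a = \<pi>0) \<and> (\<forall>b\<in>B. \<pi> \<bullet> b = \<pi>0 + 1))"
      unfolding two_partitionable_def two_partitionable_set_def S_def by auto
    define n where "n = card S"
    have n2: "n \<ge> 2"
    proof -
      obtain a b where "a \<in> S" "b \<in> S" "a \<noteq> b" using np1 by blast
      then have "card {a, b} \<le> card S" using fS by (intro card_mono) auto
      then show ?thesis using \<open>a \<noteq> b\<close> by (simp add: n_def)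
    qed
    define xbar where "xbar = (1 / real n) *\<^sub>R (\<Sum>z\<in>S. z)"
    have Sne: "S \<noteq> {}" using n2 n_def by auto
    have xbarS: "xbar \<in> convex hull S" using avg_in_hull[OF fS Sne, of id] by (simp add: xbar_def n_def)
    have xbar_int: "xbar \<in> interior L"
    proof (rule ccontr)
      assume nx: "xbar \<notin> interior L"
      have xL: "xbar \<in> L" using xbarS FS FL by auto
      have "interior L \<noteq> {}" using f_int by auto
      then have "rel_interior L = interior L" by (rule rel_interior_nonempty_interior)
      then have "xbar \<in> rel_frontier L" using nx xL cL
        by (simp add: rel_frontier_def closure_closed compact_imp_closed)
      then obtain G where G: "G facet_of L" "xbar \<in> G" using rel_frontier_of_polyhedron[OF polyL] by auto
      have GL: "G face_of L" using G facet_of_imp_face_of by blast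
      have "S \<subseteq> G"
      proof
        fix z assume zS: "z \<in> S"
        define rz where "rz = (1 / (real n - 1)) *\<^sub>R (\<Sum>x\<in>S-{z}. x)"
        have cS1: "card (S - {z}) = n - 1" using zS fS n_def by simp
        have S1ne: "S - {z} \<noteq> {}" using cS1 n2 by (metis card.empty diff_is_0_eq not_numeral_le_zero le_add_diff_inverse2 one_le_numeral Suc_1 not_less_eq_eq)
        have "rz \<in> convex hull (id ` (S - {z}))"
          using avg_in_hull[OF _ S1ne, of id] fS cS1 n2 by (simp add: rz_def of_nat_diff)
        also have "\<dots> \<subseteq> convex hull S" by (intro hull_mono) auto
        finally have rzL: "rz \<in> L" using FS FL by auto
        have xs: "xbar = (1 - (real n - 1) / real n) *\<^sub>R z + ((real n - 1) / real n) *\<^sub>R rz"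
        proof -
          have "xbar = (1 / real n) *\<^sub>R z + ((real n - 1) / real n) *\<^sub>R rz"
            unfolding xbar_def rz_def using avg_split[OF fS zS n_def[symmetric] n2, of id] by simp
          moreover have "1 - (real n - 1) / real n = 1 / real n" using n2 by (simp add: field_simps)
          ultimately show ?thesis by simp
        qed
        show "z \<in> G"
        proof (cases "z = rz")
          case True
          then have "xbar = z" using xs by (simp add: algebra_simps)
          then show ?thesis using G by simp
        next
          case False
          have "xbar \<in> open_segment z rz" unfolding in_segment(2)
            using False n2 xs by (intro conjI exI[where x = "(real n - 1) / real n"]) (auto simp: field_simps)
          then show ?thesis using face_ofD[OF GL _ _ rzL G(2)] zS SL by blast
        qed
      qed
      then have "F \<subseteq> G" using FS GL face_of_imp_convex hull_minimal by metis
      then show False using Fnf G by blast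
    qed
    define \<psi> where "\<psi> j = gauge_psi L f (r j)" for j
    define cut where "cut (s::real^'k) = (\<Sum>j\<in>UNIV. \<psi> j * s $ j)" for s
    have ex: "\<forall>z\<in>L. \<exists>s. (\<forall>j. s $ j \<ge> 0) \<and> z = f + (\<Sum>j\<in>UNIV. s $ j *\<^sub>R r j) \<and> cut s \<le> 1"
      using lift_le[OF cL cvL f_int corners] unfolding cut_def \<psi>_def by blast
    then obtain sg where sg0: "\<forall>z\<in>L. (\<forall>j. sg z $ j \<ge> 0) \<and> z = f + (\<Sum>j\<in>UNIV. sg z $ j *\<^sub>R r j) \<and> cut (sg z) \<le> 1"
      using bchoice[OF ex] by blast
    then have sg: "\<And>z. z \<in> L \<Longrightarrow> (\<forall>j. sg z $ j \<ge> 0) \<and> z = f + (\<Sum>j\<in>UNIV. sg z $ j *\<^sub>R r j) \<and> cut (sg z) \<le> 1"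
      by blast
    obtain sp where sp: "\<forall>j. sp $ j \<ge> 0" "xbar = f + (\<Sum>j\<in>UNIV. sp $ j *\<^sub>R r j)" "cut sp < 1"
      using lift_lt[OF cL cvL f_int corners xbar_int] unfolding cut_def \<psi>_def by blast
    define g where "g z = (z, sg z)" for z
    define yb where "yb = (1 / real n) *\<^sub>R (\<Sum>z\<in>S. g z)"
    have fyb: "fst yb = xbar" by (simp add: yb_def xbar_def g_def fst_sum)
    have syb: "snd yb = (1 / real n) *\<^sub>R (\<Sum>z\<in>S. sg z)" by (simp add: yb_def g_def snd_sum)
    define d where "d = (xbar, sp) - yb"
    have d0: "fst d = 0" by (simp add: d_def fyb)
    define q where "q h = yb + h *\<^sub>R d" for h
    define K where "K h = convex hull (g ` S \<union> {q h})" for h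
    define c where "c = 1 / (2 * real n)"
    have c0: "0 < c" "c \<le> 1" using n2 by (auto simp: c_def)
    have step: "K (h * c) \<subseteq> split_closure (K h)" if h0: "h > 0" for h
      unfolding split_closure_def
    proof (intro subsetI INT_I)
      fix p and \<pi> :: "real^'m" and \<pi>0 assume p: "p \<in> K (h * c)" and ipi: "\<pi> \<in> {\<pi>. int_vec \<pi>}" and ipi0: "(\<pi>0::real) \<in> \<int>"
      have nonpart: "\<exists>z\<in>S. \<pi> \<bullet> z \<noteq> \<pi>0 \<and> \<pi> \<bullet> z \<noteq> \<pi>0 + 1"
        if a1: "\<pi>0 < \<pi> \<bullet> fst yb" and a2: "\<pi> \<bullet> fst yb < \<pi>0 + 1"
      proof (rule ccontr)
        assume "\<not> ?thesis"
        then have all: "\<forall>z\<in>S. \<pi> \<bullet> z = \<pi>0 \<or> \<pi> \<bullet> z = \<pi>0 + 1" by auto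
        define A where "A = {z \<in> S. \<pi> \<bullet> z = \<pi>0}"
        define B where "B = {z \<in> S. \<pi> \<bullet> z = \<pi>0 + 1}"
        have avg: "\<pi> \<bullet> fst yb = (1 / real n) * (\<Sum>z\<in>S. \<pi> \<bullet> z)"
          by (simp add: fyb xbar_def inner_sum_right)
        have "A \<noteq> {}"
        proof
          assume "A = {}"
          then have "\<forall>z\<in>S. \<pi> \<bullet> z = \<pi>0 + 1" using all A_def by auto
          then have "(\<Sum>z\<in>S. \<pi> \<bullet> z) = real n * (\<pi>0 + 1)" by (simp add: n_def)
          then show False using avg a2 n2 by simp
        qed
        moreover have "B \<noteq> {}"
        proof
          assume "B = {}"
          then have "\<forall>z\<in>S. \<pi> \<bullet> z = \<pi>0" using all B_def by auto
          then have "(\<Sum>z\<in>S. \<pi> \<bullet> z) = real n * \<pi>0" by (simp add: n_def)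
          then show False using avg a1 n2 by simp
        qed
        moreover have "A \<inter> B = {}" "A \<union> B = S" using all by (auto simp: A_def B_def)
        ultimately have "\<exists>\<pi> \<pi>0 A B. int_vec \<pi> \<and> \<pi>0 \<in> \<int> \<and> A \<noteq> {} \<and> B \<noteq> {} \<and>
          A \<inter> B = {} \<and> A \<union> B = S \<and>
          (\<forall>a\<in>A. \<pi> \<bullet> a = \<pi>0) \<and> (\<forall>b\<in>B. \<pi> \<bullet> b = \<pi>0 + 1)"
          using ipi ipi0 by (intro exI[of _ \<pi>] exI[of _ \<pi>0] exI[of _ A] exI[of _ B]) (simp add: A_def B_def)
        then show False using np2 by blast
      qed
      have gl: "g = (\<lambda>z. (z, sg z))" by (rule ext) (simp add: g_def)
      have ybf: "yb = (1 / real n) *\<^sub>R (\<Sum>z\<in>S. (z, sg z))" by (simp add: yb_def gl)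
      have ipi': "int_vec \<pi>" using ipi by simp
      have kk: "convex hull ((\<lambda>z. (z, sg z)) ` S \<union> {yb + (h / (2 * real n)) *\<^sub>R d})
         \<subseteq> split_set (convex hull ((\<lambda>z. (z, sg z)) ` S \<union> {yb + h *\<^sub>R d})) \<pi> \<pi>0"
        by (rule key_step[OF fS n_def[symmetric] n2 intS ybf d0 h0 ipi' ipi0 nonpart])
      have hc: "h * c = h / (2 * real n)" by (simp add: c_def)
      have "K (h * c) \<subseteq> split_set (K h) \<pi> \<pi>0"
        unfolding K_def q_def hc gl by (rule kk)
      then show "p \<in> split_set (K h) \<pi> \<pi>0" using p by auto
    qed
    have mono_sc: "split_closure A \<subseteq> split_closure B" if AB: "A \<subseteq> B" for A B
    proof -
      have ss: "split_set A \<pi> \<pi>0 \<subseteq> split_set B \<pi> \<pi>0" for \<pi> \<pi>0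
        unfolding split_set_def using AB by (intro hull_mono) auto
      show ?thesis unfolding split_closure_def using ss by blast
    qed
    have PP: "P = {(x, s). (\<forall>j. s $ j \<ge> (0::real)) \<and> x = f + (\<Sum>j\<in>UNIV. s $ j *\<^sub>R r j)}" by (rule P_def)
    have cP: "convex P" unfolding PP by (rule convex_P)
    have K1: "K 1 \<subseteq> P"
    proof -
      have "g ` S \<subseteq> P" using sg SL by (auto simp: PP g_def)
      moreover have "q 1 = (xbar, sp)" by (simp add: q_def d_def)
      then have "q 1 \<in> P" using sp by (simp add: PP)
      ultimately show ?thesis unfolding K_def using cP by (intro hull_minimal) auto
    qed
    have rk: "K (c ^ t) \<subseteq> rank_split_closure t P" for t
    proof (induction t)
      case 0
      then show ?case using K1 by (simp add: rank_split_closure_def)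
    next
      case (Suc t)
      have "K (c ^ Suc t) = K (c ^ t * c)" by (simp add: mult.commute)
      also have "\<dots> \<subseteq> split_closure (K (c ^ t))" using step c0 by simp
      also have "\<dots> \<subseteq> split_closure (rank_split_closure t P)" using Suc mono_sc by blast
      finally show ?case by (simp add: rank_split_closure_def)
    qed
    have cyb: "cut (snd yb) \<le> 1"
    proof -
      have "cut (snd yb) = (\<Sum>j\<in>UNIV. \<psi> j * ((1 / real n) * (\<Sum>z\<in>S. sg z $ j)))"
        unfolding syb cut_def by simp
      also have "\<dots> = (\<Sum>j\<in>UNIV. (1 / real n) * (\<Sum>z\<in>S. \<psi> j * sg z $ j))"
        by (rule sum.cong) (simp_all add: sum_distrib_left mult.left_commute)
      also have "\<dots> = (1 / real n) * (\<Sum>j\<in>UNIV. \<Sum>z\<in>S. \<psi> j * sg z $ j)"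
        by (simp add: sum_distrib_left)
      also have "\<dots> = (1 / real n) * (\<Sum>z\<in>S. cut (sg z))"
        unfolding cut_def by (subst sum.swap) (rule refl)
      also have "\<dots> \<le> (1 / real n) * (\<Sum>z\<in>S. 1)"
        using sg SL by (intro mult_left_mono sum_mono) auto
      also have "\<dots> = 1" using n2 by (simp add: n_def)
      finally show ?thesis .
    qed
    have viol: "cut (snd (q h)) < 1" if "0 < h" "h \<le> 1" for h
    proof -
      have "snd (q h) = (1 - h) *\<^sub>R snd yb + h *\<^sub>R sp" by (simp add: q_def d_def algebra_simps)
      then have "cut (snd (q h)) = (1 - h) * cut (snd yb) + h * cut sp"
        unfolding cut_def using cut_comb[of \<psi> "1 - h" "snd yb" h sp] by simp
      also have "\<dots> < (1 - h) * 1 + h * 1"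
        using that cyb sp(3) by (intro add_le_less_mono mult_left_mono mult_strict_left_mono) auto
      finally show ?thesis by simp
    qed
    obtain t where t: "\<forall>p \<in> rank_split_closure t P. (\<lambda>(x, s). (\<Sum>j\<in>UNIV. gauge_psi L f (r j) * s $ j) \<ge> 1) p"
      using rank unfolding finite_split_rank_def by blast
    have "q (c ^ t) \<in> K (c ^ t)" unfolding K_def by (rule hull_inc) simp
    then have "q (c ^ t) \<in> rank_split_closure t P" using rk by blast
    then have tq: "(\<lambda>(x, s). (\<Sum>j\<in>UNIV. gauge_psi L f (r j) * s $ j) \<ge> 1) (q (c ^ t))"
      by (rule bspec[OF t])
    obtain qx qs where qxs: "q (c ^ t) = (qx, qs)" by (cases "q (c ^ t)")
    have "cut (snd (q (c ^ t))) \<ge> 1" using tq unfolding qxs cut_def \<psi>_def by simp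
    moreover have "cut (snd (q (c ^ t))) < 1"
    proof (rule viol)
      show "0 < c ^ t" using c0 by simp
      show "c ^ t \<le> 1" using c0 by (intro power_le_one) auto
    qed
    ultimately show False by simp
  qed
qed


end
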